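(* Let $H_1,H_2$ be $r\times n$ matrices of rank $r$ over $\mathbb{F}_q$. Let $m$ be the number of pairs $(U,P)$ with $U\in\mathrm{GL}_r(\mathbb{F}_q)$ and $P$ an $n\times n$ permutation matrix such that $UH_2=H_1P$, let $m_u$ be the number of distinct $U$ occurring in such pairs and $m_p$ the number of distinct $P$ occurring in such pairs. Then for a fixed $U$ with $(U,P_1)$ such a pair, $(U,P_2)$ is also such a pair if and only if $P_2$ lies in the same right coset of $\mathrm{Sym}(H_1)$ as $P_1$. Consequently $m_p=m=m_u\,|\mathrm{Sym}(H_1)|$.
   Context: $\mathrm{Sym}(H_1)=\{P\in S_n: H_1P=H_1\}$ is the subgroup of permutation matrices leaving $H_1$ unchanged under column permutation. *)

theory Defs
  imports "Jordan_Normal_Form.DL_Rank" "HOL-Combinatorics.Permutations"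
begin

definition perm_mat :: "nat \<Rightarrow> (nat \<Rightarrow> nat) \<Rightarrow> 'a::field mat" where
  "perm_mat n p = mat n n (\<lambda>(i,j). if i = p j then 1 else 0)"

definition perm_mats :: "nat \<Rightarrow> 'a::field mat set" where
  "perm_mats n = {perm_mat n p | p. p permutes {..<n}}"

definition GL :: "nat \<Rightarrow> 'a::field mat set" where
  "GL r = {U \<in> carrier_mat r r. invertible_mat U}"

definition Sym :: "nat \<Rightarrow> 'a::field mat \<Rightarrow> 'a mat set" where
  "Sym n H = {P \<in> perm_mats n. H * P = H}"

definition equiv_pairs :: "nat \<Rightarrow> nat \<Rightarrow> 'a::field mat \<Rightarrow> 'a mat \<Rightarrow> ('a mat \<times> 'a mat) set" where
  "equiv_pairs r n H1 H2 = {(U,P). U \<in> GL r \<and> P \<in> perm_mats n \<and> U * H2 = H1 * P}"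

end

theory Submission imports Defs begin

lemma perm_mat_carrier[simp]: "perm_mat n p \<in> carrier_mat n n"
  unfolding perm_mat_def by simp

lemma perm_mat_mult:
  assumes p: "p permutes {..<n}" and q: "q permutes {..<n}"
  shows "(perm_mat n p :: 'a::field mat) * perm_mat n q = perm_mat n (p \<circ> q)"
proof (rule eq_matI)
  fix i j assume i: "i < dim_row (perm_mat n (p \<circ> q) :: 'a mat)" and j: "j < dim_col (perm_mat n (p \<circ> q) :: 'a mat)"
  hence i: "i < n" and j: "j < n" unfolding perm_mat_def by auto
  have qj: "q j < n" using permutes_in_image[OF q, of j] j by simp
  have "((perm_mat n p :: 'a mat) * perm_mat n q) $$ (i,j)
     = (\<Sum>k\<in>{0..<n}. (if i = p k then 1 else 0) * (if k = q j then 1 else (0::'a)))"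
    using i j unfolding perm_mat_def by (simp add: scalar_prod_def)
  also have "\<dots> = (\<Sum>k\<in>{0..<n}. if k = q j then (if i = p k then 1 else 0) else (0::'a))"
    by (rule sum.cong) auto
  also have "\<dots> = (if i = p (q j) then 1 else 0)" using qj by (simp add: sum.delta')
  finally show "((perm_mat n p :: 'a mat) * perm_mat n q) $$ (i,j) = perm_mat n (p \<circ> q) $$ (i,j)"
    using i j unfolding perm_mat_def by simp
qed (auto simp: perm_mat_def)

lemma perm_mat_id: "perm_mat n id = (1\<^sub>m n :: 'a::field mat)"
  unfolding perm_mat_def by (rule eq_matI) auto

lemma perm_mat_inv:
  assumes p: "p permutes {..<n}"
  shows "(perm_mat n p :: 'a::field mat) * perm_mat n (inv_into UNIV p) = 1\<^sub>m n"
        "(perm_mat n (inv_into UNIV p) :: 'a::field mat) * perm_mat n p = 1\<^sub>m n"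
  using perm_mat_mult[OF p permutes_inv[OF p]] perm_mat_mult[OF permutes_inv[OF p] p]
    permutes_inv_o[OF p] perm_mat_id by metis+

lemma finite_perm_mats: "finite (perm_mats n :: 'a::field mat set)"
proof -
  have "perm_mats n = (perm_mat n :: _ \<Rightarrow> 'a mat) ` {p. p permutes {..<n}}"
    unfolding perm_mats_def by auto
  thus ?thesis using finite_permutations[of "{..<n}"] by simp
qed

lemma full_row_rank_cancel:
  fixes H :: "'a::field mat"
  assumes H: "H \<in> carrier_mat r n" and rk: "vec_space.rank r H = r"
    and U: "U \<in> carrier_mat r r" and U': "U' \<in> carrier_mat r r"
    and eq: "U * H = U' * H"
  shows "U = U'"
proof -
  interpret vec_space "TYPE('a)" r .
  obtain S where max: "maximal S (\<lambda>T. T \<subseteq> set (cols H) \<and> lin_indpt T)"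
    using maximal_exists[of "(\<lambda>T. T \<subseteq> set (cols H) \<and> lin_indpt T)" "card (set (cols H))" "{}"]
    by (meson List.finite_set card_mono empty_iff empty_subsetI finite_lin_indpt2 rev_finite_subset)
  have cS: "card S = r" using rank_card_indpt[OF H max] rk by simp
  have SH: "S \<subseteq> set (cols H)" and li: "lin_indpt S" using max unfolding maximal_def by auto
  have fS: "finite S" using SH finite_subset by blast
  obtain xs where xs: "set xs = S" "distinct xs" using finite_distinct_list[OF fS] by blast
  have lxs: "length xs = r" using xs cS distinct_card by fastforce
  have xsc: "set xs \<subseteq> carrier_vec r" using xs SH H cols_dim by blast
  define A where "A = mat_of_cols r xs"
  have A: "A \<in> carrier_mat r r" unfolding A_def using lxs mat_of_cols_carrier(1) by metis
  have cA: "cols A = xs" unfolding A_def using xsc by simp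
  have "rank A = r" using lin_indpt_full_rank[OF A] cA xs li by simp
  hence dA: "det A \<noteq> 0" using det_rank_iff[OF A] by simp
  from det_non_zero_imp_unit[OF A dA, of undefined]
  obtain B where B: "B \<in> carrier_mat r r" "A * B = 1\<^sub>m r"
    unfolding Units_def ring_mat_def by auto
  have UA: "U * A = U' * A"
  proof (rule mat_col_eqI)
    fix j assume "j < dim_col (U' * A)"
    hence j: "j < r" using A U' by simp
    have "col A j \<in> set (cols H)" using j cA lxs xs SH
      by (metis cols_length cols_nth nth_mem A carrier_matD(2) subsetD)
    then obtain k where k: "k < n" "col A j = col H k" using H
      by (metis cols_length cols_nth in_set_conv_nth carrier_matD(2))
    have "col (U * A) j = U *\<^sub>v col H k" using col_mult2[OF U A j] k by simp
    also have "\<dots> = col (U * H) k" using col_mult2[OF U H k(1)] by simp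
    also have "\<dots> = col (U' * H) k" using eq by simp
    also have "\<dots> = U' *\<^sub>v col H k" using col_mult2[OF U' H k(1)] by simp
    also have "\<dots> = col (U' * A) j" using col_mult2[OF U' A j] k by simp
    finally show "col (U * A) j = col (U' * A) j" .
  qed (use U U' A in auto)
  have "U = U * (A * B)" using U B by simp
  also have "\<dots> = (U * A) * B" using U A B by (simp add: assoc_mult_mat)
  also have "\<dots> = (U' * A) * B" using UA by simp
  also have "\<dots> = U' * (A * B)" using U' A B by (simp add: assoc_mult_mat)
  also have "\<dots> = U'" using U' B by simp
  finally show ?thesis .
qed

lemma perm_matsE:
  assumes "P \<in> perm_mats n"
  obtains p where "p permutes {..<n}" "P = perm_mat n p"
  using assms unfolding perm_mats_def by auto

theorem lemma2:
  fixes H1 H2 :: "'a::{field,finite} mat" and r n :: nat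
  assumes "H1 \<in> carrier_mat r n" and "H2 \<in> carrier_mat r n"
    and "vec_space.rank r H1 = r" and "vec_space.rank r H2 = r"
  shows "(\<forall>U P1 P2. (U, P1) \<in> equiv_pairs r n H1 H2 \<longrightarrow>
            ((U, P2) \<in> equiv_pairs r n H1 H2 \<longleftrightarrow> P2 \<in> {S * P1 | S. S \<in> Sym n H1}))
       \<and> card (snd ` equiv_pairs r n H1 H2) = card (equiv_pairs r n H1 H2)
       \<and> card (equiv_pairs r n H1 H2) = card (fst ` equiv_pairs r n H1 H2) * card (Sym n H1)"
proof -
  note H1 = assms(1) and H2 = assms(2)
  define E where "E = equiv_pairs r n H1 H2"
  have memE: "(U,P) \<in> E \<longleftrightarrow> U \<in> GL r \<and> P \<in> perm_mats n \<and> U * H2 = H1 * P" for U P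
    unfolding E_def equiv_pairs_def by simp
  have A: "P2 \<in> {S * P1 | S. S \<in> Sym n H1}" if "(U,P1) \<in> E" "(U,P2) \<in> E" for U P1 P2
  proof -
    from that have P1: "P1 \<in> perm_mats n" and P2: "P2 \<in> perm_mats n"
      and e: "H1 * P1 = H1 * P2" by (auto simp: memE)
    obtain p where p: "p permutes {..<n}" "P1 = perm_mat n p" using P1 by (rule perm_matsE)
    obtain q where q: "q permutes {..<n}" "P2 = perm_mat n q" using P2 by (rule perm_matsE)
    have pi: "inv_into UNIV p permutes {..<n}" using permutes_inv[OF p(1)] .
    define S where "S = (perm_mat n (q \<circ> inv_into UNIV p) :: 'a mat)"
    have S2: "S = P2 * perm_mat n (inv_into UNIV p)"
      unfolding S_def q(2) by (rule perm_mat_mult[OF q(1) pi, symmetric])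
    have "S * P1 = P2 * (perm_mat n (inv_into UNIV p) * P1)"
      unfolding S2 p(2) q(2) by (simp add: assoc_mult_mat[of _ n n _ n _ n])
    also have "\<dots> = P2" using perm_mat_inv(2)[where 'a = 'a, OF p(1)] p(2) q(2) by (simp add: right_mult_one_mat[OF perm_mat_carrier])
    finally have SP: "S * P1 = P2" .
    have "H1 * S = (H1 * P2) * perm_mat n (inv_into UNIV p)"
      unfolding S2 q(2) using H1 by (simp add: assoc_mult_mat[of _ r n _ n _ n])
    also have "\<dots> = H1 * (P1 * perm_mat n (inv_into UNIV p))"
      unfolding e[symmetric] p(2) using H1 by (simp add: assoc_mult_mat[of _ r n _ n _ n])
    also have "\<dots> = H1" using perm_mat_inv(1)[where 'a = 'a, OF p(1)] p(2) H1 by simp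
    finally have "H1 * S = H1" .
    moreover have "S \<in> perm_mats n" unfolding S_def perm_mats_def
      using permutes_compose[OF pi q(1)] by blast
    ultimately have "S \<in> Sym n H1" unfolding Sym_def by simp
    thus ?thesis using SP by blast
  qed
  have B: "(U, S * P1) \<in> E" if "(U,P1) \<in> E" "S \<in> Sym n H1" for U P1 S
  proof -
    from that have P1: "P1 \<in> perm_mats n" and U: "U \<in> GL r" and e: "U * H2 = H1 * P1"
      and S: "S \<in> perm_mats n" "H1 * S = H1" by (auto simp: memE Sym_def)
    obtain p where p: "p permutes {..<n}" "P1 = perm_mat n p" using P1 by (rule perm_matsE)
    obtain s where s: "s permutes {..<n}" "S = perm_mat n s" using S(1) by (rule perm_matsE)
    have "S * P1 \<in> perm_mats n" unfolding p(2) s(2) perm_mat_mult[where 'a = 'a, OF s(1) p(1)] perm_mats_def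
      using permutes_compose[OF p(1) s(1)] by blast
    moreover have "H1 * (S * P1) = H1 * P1"
      using S(2) H1 p(2) s(2) by (simp add: assoc_mult_mat[of _ r n _ n _ n, symmetric])
    ultimately show ?thesis using U e by (simp add: memE)
  qed
  have part1: "\<forall>U P1 P2. (U, P1) \<in> E \<longrightarrow> ((U, P2) \<in> E \<longleftrightarrow> P2 \<in> {S * P1 | S. S \<in> Sym n H1})"
    using A B by blast
  have inj: "inj_on snd E"
  proof (rule inj_onI)
    fix x y assume x: "x \<in> E" and y: "y \<in> E" and s: "snd x = snd y"
    obtain U P where xx: "x = (U,P)" by (cases x)
    obtain U' P' where yy: "y = (U',P')" by (cases y)
    from x y s xx yy have U: "U \<in> carrier_mat r r" and U': "U' \<in> carrier_mat r r"
      and "U * H2 = U' * H2" by (auto simp: memE GL_def)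
    hence "U = U'" using full_row_rank_cancel[OF H2 assms(4)] by blast
    thus "x = y" using xx yy s by simp
  qed
  have fin: "finite E"
  proof -
    have "snd ` E \<subseteq> perm_mats n" by (auto simp: memE)
    hence "finite (snd ` E)" using finite_perm_mats finite_subset by blast
    thus ?thesis using inj finite_image_iff by blast
  qed
  have part2: "card (snd ` E) = card E" using card_image[OF inj] .
  have finSym: "finite (Sym n H1)"
    using finite_perm_mats[of n] unfolding Sym_def by (rule rev_finite_subset) auto
  have fiber: "card {P. (U,P) \<in> E} = card (Sym n H1)" if Uin: "U \<in> fst ` E" for U
  proof -
    obtain P1 where UP1: "(U,P1) \<in> E" using Uin by force
    have P1: "P1 \<in> perm_mats n" using UP1 by (simp add: memE)
    obtain p where p: "p permutes {..<n}" "P1 = perm_mat n p" using P1 by (rule perm_matsE)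
    have eq: "{P. (U,P) \<in> E} = (\<lambda>S. S * P1) ` Sym n H1"
      using A[OF UP1] B[OF UP1] by blast
    have "inj_on (\<lambda>S. S * P1) (Sym n H1)"
    proof (rule inj_onI)
      fix S T assume S: "S \<in> Sym n H1" and T: "T \<in> Sym n H1" and st: "S * P1 = T * P1"
      have Sc: "S \<in> carrier_mat n n" and Tc: "T \<in> carrier_mat n n"
        using S T unfolding Sym_def perm_mats_def by auto
      have "S = S * (P1 * perm_mat n (inv_into UNIV p))" using perm_mat_inv(1)[where 'a = 'a, OF p(1)] p(2) Sc by simp
      also have "\<dots> = (S * P1) * perm_mat n (inv_into UNIV p)"
        using Sc p(2) by (simp add: assoc_mult_mat[of _ n n _ n _ n])
      also have "\<dots> = (T * P1) * perm_mat n (inv_into UNIV p)" using st by simp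
      also have "\<dots> = T * (P1 * perm_mat n (inv_into UNIV p))"
        using Tc p(2) by (simp add: assoc_mult_mat[of _ n n _ n _ n])
      also have "\<dots> = T" using perm_mat_inv(1)[where 'a = 'a, OF p(1)] p(2) Tc by simp
      finally show "S = T" .
    qed
    thus ?thesis unfolding eq by (rule card_image)
  qed
  have sig: "E = Sigma (fst ` E) (\<lambda>U. {P. (U,P) \<in> E})" by force
  have "card E = (\<Sum>U\<in>fst ` E. card {P. (U,P) \<in> E})"
    apply (subst sig)
    apply (rule card_SigmaI)
    using fin apply simp
    using fin by (auto intro!: finite_subset[OF _ finite_imageI[OF fin, of snd]] simp: image_iff; force)
  also have "\<dots> = (\<Sum>U\<in>fst ` E. card (Sym n H1))" using fiber by simp
  also have "\<dots> = card (fst ` E) * card (Sym n H1)" by simp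
  finally have part3: "card E = card (fst ` E) * card (Sym n H1)" .
  show ?thesis using part1 part2 part3 unfolding E_def by blast
qed

end
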